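(* Let $\mathcal D=U(-1,1)$ and, for $m\in\mathbb N$ ($m\ge 1$), let $\mathcal D_m$ denote the distribution of the sum of $m$ i.i.d. samples from $\mathcal D$. Let $Z_1\sim\mathcal D_{m}$ for some $m\ge 1$, let $X\sim\mathcal D$, and let $Y$ be a continuous random variable whose probability density function $f_Y$ satisfies $f_Y(y)\ge f_Y(-y)$ for every $y\ge 0$, where $Z_1$, $X$, $Y$ are independent. Then $\mathbb P(Z_1\ge Y)\le \mathbb P(Z_1+X\ge Y)$. *)

theory Defs
  imports "HOL-Probability.Probability"
begin

definition unifD :: "real measure" where
  "unifD = uniform_measure lborel {-1..1}"

definition unifD_sum :: "nat \<Rightarrow> real measure" where
  "unifD_sum m = distr (PiM {..<m} (\<lambda>_. unifD)) lborel (\<lambda>\<omega>. \<Sum>i<m. \<omega> i)"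

end

theory Submission
  imports Defs
begin

lemma U_prob: "prob_space unifD"
  unfolding unifD_def by (rule prob_space_uniform_measure) auto

lemma sets_U[measurable_cong, simp]: "sets unifD = sets borel"
  unfolding unifD_def by simp

lemma space_U[simp]: "space unifD = UNIV"
  unfolding unifD_def by simp

lemma nn_integral_U:
  fixes f :: "real \<Rightarrow> ennreal"
  assumes [measurable]: "f \<in> borel_measurable borel"
  shows "(\<integral>\<^sup>+x. f x \<partial>unifD) = (\<integral>\<^sup>+x. f x * indicator {-1..1} x \<partial>lborel) / 2"
  unfolding unifD_def by (subst nn_integral_uniform_measure) auto

lemma lborel_shift:
  fixes f :: "real \<Rightarrow> ennreal"
  assumes [measurable]: "f \<in> borel_measurable borel"
  shows "(\<integral>\<^sup>+x. f x \<partial>lborel) = (\<integral>\<^sup>+x. f (x + t) \<partial>lborel)"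
  using nn_integral_real_affine[where f=f and c=1 and t=t] assms by (simp add: add.commute)

lemma lborel_reflect:
  fixes f :: "real \<Rightarrow> ennreal"
  assumes [measurable]: "f \<in> borel_measurable borel"
  shows "(\<integral>\<^sup>+x. f (- x) \<partial>lborel) = (\<integral>\<^sup>+x. f x \<partial>lborel)"
  using nn_integral_real_affine[where f=f and c="-1" and t=0] assms by simp

lemma reflect_U:
  fixes f :: "real \<Rightarrow> ennreal"
  assumes [measurable]: "f \<in> borel_measurable borel"
  shows "(\<integral>\<^sup>+x. f (- x) \<partial>unifD) = (\<integral>\<^sup>+x. f x \<partial>unifD)"
proof -
  have "(\<integral>\<^sup>+x. f (- x) * indicator {-1..1} x \<partial>lborel) = (\<integral>\<^sup>+x. f (- x) * indicator {-1..1} (-x) \<partial>lborel)"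
    by (intro nn_integral_cong) (auto simp: indicator_def)
  also have "\<dots> = (\<integral>\<^sup>+x. f x * indicator {-1..1} x \<partial>lborel)"
    by (rule lborel_reflect[of "\<lambda>x. f x * indicator {-1..1} x"]) measurable
  finally show ?thesis
    by (simp add: nn_integral_U)
qed

lemma window_mono_lborel:
  fixes \<phi> :: "real \<Rightarrow> ennreal"
  assumes [measurable]: "\<phi> \<in> borel_measurable borel"
    and mono: "\<And>a b. \<bar>a\<bar> \<le> \<bar>b\<bar> \<Longrightarrow> \<phi> b \<le> \<phi> a"
    and c: "0 \<le> c" "c \<le> c'"
  shows "(\<integral>\<^sup>+x. \<phi> (c' - x) * indicator {-1..1} x \<partial>lborel)
       \<le> (\<integral>\<^sup>+x. \<phi> (c - x) * indicator {-1..1} x \<partial>lborel)"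
proof (cases "c' - c \<ge> 2")
  case True
  show ?thesis
  proof (intro nn_integral_mono)
    fix x :: real
    show "\<phi> (c' - x) * indicator {-1..1} x \<le> \<phi> (c - x) * indicator {-1..1} x"
    proof (cases "x \<in> {-1..1}")
      case True
      then have "\<bar>c - x\<bar> \<le> \<bar>c' - x\<bar>" using \<open>c' - c \<ge> 2\<close> c by auto
      then show ?thesis using mono by (auto simp: indicator_def)
    qed (auto simp: indicator_def)
  qed
next
  case False
  define d where "d = c' - c"
  have d: "0 \<le> d" "d < 2" using False c by (auto simp: d_def)
  have "(\<integral>\<^sup>+x. \<phi> (c' - x) * indicator {-1..1} x \<partial>lborel)
      = (\<integral>\<^sup>+u. \<phi> (c' - (u + d)) * indicator {-1..1} (u + d) \<partial>lborel)"
    by (rule lborel_shift) measurable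
  also have "\<dots> = (\<integral>\<^sup>+u. \<phi> (c - u) * indicator {-1-d..<-1} u + \<phi> (c - u) * indicator {-1..1-d} u \<partial>lborel)"
    using d by (intro nn_integral_cong) (auto simp: indicator_def d_def)
  also have "\<dots> = (\<integral>\<^sup>+u. \<phi> (c - u) * indicator {-1-d..<-1} u \<partial>lborel) + (\<integral>\<^sup>+u. \<phi> (c - u) * indicator {-1..1-d} u \<partial>lborel)"
    by (rule nn_integral_add) measurable
  also have "(\<integral>\<^sup>+u. \<phi> (c - u) * indicator {-1-d..<-1} u \<partial>lborel) = (\<integral>\<^sup>+v. \<phi> (c - (v - 2)) * indicator {-1-d..<-1} (v - 2) \<partial>lborel)"
    using lborel_shift[of "\<lambda>u. \<phi> (c - u) * indicator {-1-d..<-1} u" "-2"] by simp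
  also have "\<dots> \<le> (\<integral>\<^sup>+v. \<phi> (c - v) * indicator {1-d..<1} v \<partial>lborel)"
  proof (intro nn_integral_mono)
    fix v :: real
    show "\<phi> (c - (v - 2)) * indicator {-1-d..<-1} (v - 2) \<le> \<phi> (c - v) * indicator {1-d..<1} v"
    proof (cases "v \<in> {1-d..<1}")
      case True
      then have "\<bar>c - v\<bar> \<le> \<bar>c - (v - 2)\<bar>" using c by auto
      then show ?thesis using mono True by (auto simp: indicator_def)
    qed (auto simp: indicator_def)
  qed
  also have "(\<integral>\<^sup>+v. \<phi> (c - v) * indicator {1-d..<1} v \<partial>lborel) + (\<integral>\<^sup>+u. \<phi> (c - u) * indicator {-1..1-d} u \<partial>lborel)
     = (\<integral>\<^sup>+v. \<phi> (c - v) * indicator {1-d..<1} v + \<phi> (c - v) * indicator {-1..1-d} v \<partial>lborel)"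
    by (rule nn_integral_add[symmetric]) measurable
  also have "\<dots> \<le> (\<integral>\<^sup>+x. \<phi> (c - x) * indicator {-1..1} x \<partial>lborel)"
    using d by (intro nn_integral_mono_AE eventually_mono[OF AE_lborel_singleton[of "1 - d"]])
      (auto simp: indicator_def)
  finally show ?thesis by (simp add: add_right_mono)
qed

lemma window_mono:
  fixes \<phi> :: "real \<Rightarrow> ennreal"
  assumes [measurable]: "\<phi> \<in> borel_measurable borel"
    and mono: "\<And>a b. \<bar>a\<bar> \<le> \<bar>b\<bar> \<Longrightarrow> \<phi> b \<le> \<phi> a"
    and c: "\<bar>c\<bar> \<le> \<bar>c'\<bar>"
  shows "(\<integral>\<^sup>+x. \<phi> (c' - x) \<partial>unifD) \<le> (\<integral>\<^sup>+x. \<phi> (c - x) \<partial>unifD)"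
proof -
  have even: "(\<integral>\<^sup>+x. \<phi> (e - x) \<partial>unifD) = (\<integral>\<^sup>+x. \<phi> (\<bar>e\<bar> - x) \<partial>unifD)" for e
  proof (cases "e \<ge> 0")
    case False
    have "(\<integral>\<^sup>+x. \<phi> (e - x) \<partial>unifD) = (\<integral>\<^sup>+x. \<phi> (e - (- x)) \<partial>unifD)"
      by (rule reflect_U[of "\<lambda>x. \<phi> (e - x)", symmetric]) measurable
    also have "\<dots> = (\<integral>\<^sup>+x. \<phi> (\<bar>e\<bar> - x) \<partial>unifD)"
    proof (intro nn_integral_cong)
      fix x
      have "\<bar>e - (- x)\<bar> = \<bar>\<bar>e\<bar> - x\<bar>" using False by auto
      then show "\<phi> (e - (- x)) = \<phi> (\<bar>e\<bar> - x)" using mono by (metis order.refl antisym)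
    qed
    finally show ?thesis .
  qed simp
  have "(\<integral>\<^sup>+x. \<phi> (\<bar>c'\<bar> - x) * indicator {-1..1} x \<partial>lborel)
       \<le> (\<integral>\<^sup>+x. \<phi> (\<bar>c\<bar> - x) * indicator {-1..1} x \<partial>lborel)"
    using c by (intro window_mono_lborel mono) auto
  then have "(\<integral>\<^sup>+x. \<phi> (\<bar>c'\<bar> - x) \<partial>unifD) \<le> (\<integral>\<^sup>+x. \<phi> (\<bar>c\<bar> - x) \<partial>unifD)"
    by (simp add: nn_integral_U divide_right_mono_ennreal)
  then show ?thesis using even by simp
qed

lemma U_singleton[simp]: "emeasure unifD {p} = 0"
proof -
  have "emeasure unifD {p} = emeasure lborel ({-1..1} \<inter> {p}) / emeasure lborel {-1..1::real}"
    unfolding unifD_def by (rule emeasure_uniform_measure) auto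
  also have "emeasure lborel ({-1..1} \<inter> {p}) = 0"
    by (cases "p \<in> {-1..1}") auto
  finally show ?thesis by simp
qed

lemma meas_shift:
  fixes N :: "real measure"
  assumes "sigma_finite_measure N" and sN: "sets N = sets borel" and S: "S \<in> sets borel"
  shows "(\<lambda>x. emeasure N {w. w + x \<in> S}) \<in> borel_measurable borel"
proof -
  interpret sigma_finite_measure N by fact
  have [measurable_cong]: "sets N = sets borel" by (rule sN)
  have sp: "space N = UNIV" using sets_eq_imp_space_eq[OF sN] by simp
  have Q: "(\<lambda>p. snd p + fst p) -` S \<inter> space (borel \<Otimes>\<^sub>M N) \<in> sets (borel \<Otimes>\<^sub>M N)"
    using S by measurable
  have "(\<lambda>x. emeasure N (Pair x -` ((\<lambda>p. snd p + fst p) -` S \<inter> space (borel \<Otimes>\<^sub>M N)))) \<in> borel_measurable borel"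
    by (rule measurable_emeasure_Pair[OF Q])
  moreover have "\<And>x. Pair x -` ((\<lambda>p. snd p + fst p) -` S \<inter> space (borel \<Otimes>\<^sub>M N)) = {w. w + x \<in> S}"
    by (auto simp: space_pair_measure sp)
  ultimately show ?thesis by simp
qed

lemma conv_swap:
  fixes N :: "real measure"
  assumes "prob_space N" and sN: "sets N = sets borel" and S: "S \<in> sets borel"
  shows "(\<integral>\<^sup>+w. emeasure unifD {x. w + x \<in> S} \<partial>N) = (\<integral>\<^sup>+x. emeasure N {w. w + x \<in> S} \<partial>unifD)"
proof -
  interpret N: prob_space N by fact
  interpret U: prob_space unifD by (rule U_prob)
  interpret P: pair_sigma_finite N unifD ..
  have [measurable_cong]: "sets N = sets borel" by (rule sN)
  have spN: "space N = UNIV" using sets_eq_imp_space_eq[OF sN] by simp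
  have S' [measurable]: "S \<in> sets borel" by (rule S)
  have e1: "emeasure unifD {x. w + x \<in> S} = (\<integral>\<^sup>+x. indicator S (w + x) \<partial>unifD)" for w
  proof -
    have "{x. w + x \<in> S} \<in> sets unifD" using S by simp
    then have "emeasure unifD {x. w + x \<in> S} = (\<integral>\<^sup>+x. indicator {x. w + x \<in> S} x \<partial>unifD)"
      by simp
    then show ?thesis by (simp add: indicator_def)
  qed
  have e2: "emeasure N {w. w + x \<in> S} = (\<integral>\<^sup>+w. indicator S (w + x) \<partial>N)" for x
  proof -
    have "{w. w + x \<in> S} \<in> sets N" using S by (simp add: sN)
    then have "emeasure N {w. w + x \<in> S} = (\<integral>\<^sup>+w. indicator {w. w + x \<in> S} w \<partial>N)"
      by simp
    then show ?thesis by (simp add: indicator_def)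
  qed
  have "(\<integral>\<^sup>+ x. (\<integral>\<^sup>+ w. indicator S (w + x) \<partial>N) \<partial>unifD) = (\<integral>\<^sup>+ w. (\<integral>\<^sup>+ x. indicator S (w + x) \<partial>unifD) \<partial>N)"
    by (rule P.Fubini'[of "\<lambda>w x. indicator S (w + x)"]) measurable
  then show ?thesis by (simp add: e1 e2)
qed

definition isconv :: "real measure \<Rightarrow> real measure \<Rightarrow> bool" where
  "isconv N N' \<longleftrightarrow> sets N' = sets borel \<and>
     (\<forall>S\<in>sets borel. emeasure N' S = (\<integral>\<^sup>+w. emeasure unifD {x. w + x \<in> S} \<partial>N))"

definition good :: "real measure \<Rightarrow> bool" where
  "good N \<longleftrightarrow> prob_space N \<and> sets N = sets borel \<and>
     (\<forall>y. emeasure N {y..} = emeasure N {..-y}) \<and>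
     (\<forall>c c' h. \<bar>c\<bar> \<le> \<bar>c'\<bar> \<longrightarrow> emeasure N {c'-h..c'+h} \<le> emeasure N {c-h..c+h})"

lemma step:
  assumes "good N" "isconv N N'"
  shows "good N'" "emeasure N' {a} = 0"
proof -
  have P: "prob_space N" and sN: "sets N = sets borel"
    and symN: "\<And>y. emeasure N {y..} = emeasure N {..-y}"
    and QN: "\<And>c c' h. \<bar>c\<bar> \<le> \<bar>c'\<bar> \<Longrightarrow> emeasure N {c'-h..c'+h} \<le> emeasure N {c-h..c+h}"
    using assms(1) unfolding good_def by auto
  interpret N: prob_space N by (rule P)
  interpret U: prob_space unifD by (rule U_prob)
  have sN': "sets N' = sets borel"
    and conv: "\<And>S. S \<in> sets borel \<Longrightarrow> emeasure N' S = (\<integral>\<^sup>+w. emeasure unifD {x. w + x \<in> S} \<partial>N)"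
    using assms(2) unfolding isconv_def by auto
  have conv2: "\<And>S. S \<in> sets borel \<Longrightarrow> emeasure N' S = (\<integral>\<^sup>+x. emeasure N {w. w + x \<in> S} \<partial>unifD)"
    using conv conv_swap[OF P sN] by simp
  have ms: "\<And>S. S \<in> sets borel \<Longrightarrow> (\<lambda>x. emeasure N {w. w + x \<in> S}) \<in> borel_measurable borel"
    by (rule meas_shift[OF _ sN]) unfold_locales
  have spN': "space N' = UNIV" using sets_eq_imp_space_eq[OF sN'] by simp
  have spN: "space N = UNIV" using sets_eq_imp_space_eq[OF sN] by simp
  have "emeasure N' (space N') = 1"
  proof -
    have "emeasure N' (space N') = (\<integral>\<^sup>+w. emeasure unifD {x. w + x \<in> UNIV} \<partial>N)"
      using conv[of UNIV] spN' by simp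
    also have "\<dots> = (\<integral>\<^sup>+w. 1 \<partial>N)"
      using U.emeasure_space_1 by simp
    also have "\<dots> = 1" using N.emeasure_space_1 spN by simp
    finally show ?thesis .
  qed
  then have PN': "prob_space N'" by (rule prob_spaceI)
  show "emeasure N' {a} = 0"
  proof -
    have "emeasure N' {a} = (\<integral>\<^sup>+w. emeasure unifD {x. w + x \<in> {a}} \<partial>N)"
      using conv[of "{a}"] by simp
    also have "\<dots> = (\<integral>\<^sup>+w. emeasure unifD {a - w} \<partial>N)"
      by (intro nn_integral_cong arg_cong[where f="emeasure unifD"]) auto
    finally show ?thesis by simp
  qed
  have symN': "emeasure N' {y..} = emeasure N' {..-y}" for y
  proof -
    have "emeasure N' {y..} = (\<integral>\<^sup>+x. emeasure N {w. w + x \<in> {y..}} \<partial>unifD)"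
      using conv2[of "{y..}"] by simp
    also have "\<dots> = (\<integral>\<^sup>+x. emeasure N {w. w + (- x) \<in> {..-y}} \<partial>unifD)"
    proof (intro nn_integral_cong)
      fix x
      have "emeasure N {w. w + x \<in> {y..}} = emeasure N {y - x..}"
        by (intro arg_cong[where f="emeasure N"]) auto
      also have "\<dots> = emeasure N {.. - (y - x)}" by (rule symN)
      also have "\<dots> = emeasure N {w. w + (- x) \<in> {..-y}}"
        by (intro arg_cong[where f="emeasure N"]) auto
      finally show "emeasure N {w. w + x \<in> {y..}} = emeasure N {w. w + (- x) \<in> {..-y}}" .
    qed
    also have "\<dots> = (\<integral>\<^sup>+x. emeasure N {w. w + x \<in> {..-y}} \<partial>unifD)"
      by (rule reflect_U[of "\<lambda>x. emeasure N {w. w + x \<in> {..-y}}"]) (rule ms, simp)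
    also have "\<dots> = emeasure N' {..-y}"
      using conv2[of "{..-y}"] by simp
    finally show ?thesis .
  qed
  have QN': "emeasure N' {c'-h..c'+h} \<le> emeasure N' {c-h..c+h}" if c: "\<bar>c\<bar> \<le> \<bar>c'\<bar>" for c c' h
  proof -
    define \<phi> where "\<phi> t = emeasure N {t-h..t+h}" for t
    have \<phi>_alt: "\<phi> t = emeasure N {w. w + (- t) \<in> {-h..h}}" for t
      unfolding \<phi>_def by (intro arg_cong[where f="emeasure N"]) auto
    have m\<phi>: "\<phi> \<in> borel_measurable borel"
    proof -
      have "(\<lambda>t. emeasure N {w. w + (- t) \<in> {-h..h}}) \<in> borel_measurable borel"
        using measurable_compose[OF borel_measurable_uminus[OF measurable_id] ms[of "{-h..h}"]]
        by (simp add: o_def)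
      moreover have "\<phi> = (\<lambda>t. emeasure N {w. w + (- t) \<in> {-h..h}})"
        using \<phi>_alt by (rule ext)
      ultimately show ?thesis by simp
    qed
    have e: "emeasure N' {e-h..e+h} = (\<integral>\<^sup>+x. \<phi> (e - x) \<partial>unifD)" for e
    proof -
      have "emeasure N' {e-h..e+h} = (\<integral>\<^sup>+x. emeasure N {w. w + x \<in> {e-h..e+h}} \<partial>unifD)"
        using conv2[of "{e-h..e+h}"] by simp
      also have "\<dots> = (\<integral>\<^sup>+x. \<phi> (e - x) \<partial>unifD)"
        unfolding \<phi>_def by (intro nn_integral_cong arg_cong[where f="emeasure N"]) auto
      finally show ?thesis .
    qed
    show ?thesis unfolding e
      by (rule window_mono[OF m\<phi> _ c]) (unfold \<phi>_def, rule QN)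
  qed
  show "good N'" unfolding good_def using PN' sN' symN' QN' by blast
qed

lemma tail_pointwise:
  assumes "good N" and atom: "\<And>a. emeasure N {a} = 0" and y: "0 \<le> y" and x: "0 \<le> x"
  shows "2 * emeasure N {y..} \<le> emeasure N {y - x..} + emeasure N {y + x..}"
proof -
  have P: "prob_space N" and sN: "sets N = sets borel"
    and QN: "\<And>c c' h. \<bar>c\<bar> \<le> \<bar>c'\<bar> \<Longrightarrow> emeasure N {c'-h..c'+h} \<le> emeasure N {c-h..c+h}"
    using assms(1) unfolding good_def by auto
  interpret N: prob_space N by (rule P)
  have [simp]: "A \<in> sets borel \<Longrightarrow> A \<in> sets N" for A using sN by simp
  have T1: "emeasure N {y - x..} = emeasure N {y-x..y} + emeasure N {y<..}"
  proof -
    have "{y - x..} = {y-x..y} \<union> {y<..}" using x by auto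
    then show ?thesis by (simp add: plus_emeasure[symmetric] disjoint_iff)
  qed
  have T2: "emeasure N {y..} = emeasure N {y<..}"
  proof -
    have "{y..} = {y} \<union> {y<..}" by auto
    moreover have "emeasure N {y} + emeasure N {y<..} = emeasure N ({y} \<union> {y<..})"
      by (rule plus_emeasure) auto
    ultimately have "emeasure N {y..} = emeasure N {y} + emeasure N {y<..}"
      by simp
    then show ?thesis using atom by simp
  qed
  have T3: "emeasure N {y..} = emeasure N {y..y+x} + emeasure N {y+x<..}"
  proof -
    have "{y..} = {y..y+x} \<union> {y+x<..}" using x by auto
    then show ?thesis by (simp add: plus_emeasure[symmetric] disjoint_iff)
  qed
  have T4: "emeasure N {y+x<..} \<le> emeasure N {y+x..}"
    by (rule emeasure_mono) auto
  have T5: "emeasure N {y..y+x} \<le> emeasure N {y-x..y}"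
  proof -
    have "\<bar>y - x/2\<bar> \<le> \<bar>y + x/2\<bar>" using x y by auto
    moreover have "y + x / 2 - x / 2 = y" "y + x / 2 + x / 2 = y + x" "y - x / 2 - x / 2 = y - x" "y - x / 2 + x / 2 = y"
      by simp_all
    ultimately show ?thesis using QN[of "y - x/2" "y + x/2" "x/2"] by (simp add: add.commute)
  qed
  have "2 * emeasure N {y..} = emeasure N {y..} + emeasure N {y..}"
    by (simp add: mult_2)
  also have "\<dots> \<le> (emeasure N {y-x..y} + emeasure N {y+x..}) + emeasure N {y<..}"
  proof -
    have "emeasure N {y..} \<le> emeasure N {y-x..y} + emeasure N {y+x..}"
      using T3 T4 T5 by (metis add_mono)
    then show ?thesis using T2 by (metis add_mono order.refl)
  qed
  also have "\<dots> = emeasure N {y - x..} + emeasure N {y + x..}"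
    using T1 by (simp add: ac_simps)
  finally show ?thesis .
qed

lemma tail_mono:
  assumes "good N" and atom: "\<And>a. emeasure N {a} = 0" and "isconv N N'" and y: "0 \<le> y"
  shows "emeasure N {y..} \<le> emeasure N' {y..}"
proof -
  have P: "prob_space N" and sN: "sets N = sets borel"
    using assms(1) unfolding good_def by auto
  interpret N: prob_space N by (rule P)
  interpret U: prob_space unifD by (rule U_prob)
  have conv: "\<And>S. S \<in> sets borel \<Longrightarrow> emeasure N' S = (\<integral>\<^sup>+w. emeasure unifD {x. w + x \<in> S} \<partial>N)"
    using assms(3) unfolding isconv_def by auto
  have conv2: "\<And>S. S \<in> sets borel \<Longrightarrow> emeasure N' S = (\<integral>\<^sup>+x. emeasure N {w. w + x \<in> S} \<partial>unifD)"
    using conv conv_swap[OF P sN] by simp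
  have ms: "\<And>S. S \<in> sets borel \<Longrightarrow> (\<lambda>x. emeasure N {w. w + x \<in> S}) \<in> borel_measurable borel"
    by (rule meas_shift[OF _ sN]) unfold_locales
  define T where "T t = emeasure N {t..}" for t
  have Talt: "T t = emeasure N {w. w + (- t) \<in> {0..}}" for t
    unfolding T_def by (intro arg_cong[where f="emeasure N"]) auto
  have mT: "T \<in> borel_measurable borel"
  proof -
    have "(\<lambda>t. emeasure N {w. w + (- t) \<in> {0..}}) \<in> borel_measurable borel"
      using measurable_compose[OF borel_measurable_uminus[OF measurable_id] ms[of "{0..}"]]
      by (simp add: o_def)
    moreover have "T = (\<lambda>t. emeasure N {w. w + (- t) \<in> {0..}})"
      using Talt by (rule ext)
    ultimately show ?thesis by simp
  qed
  have [measurable]: "(\<lambda>x. T (y - x)) \<in> borel_measurable borel" "(\<lambda>x. T (y + x)) \<in> borel_measurable borel"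
    using mT by measurable
  have e1: "emeasure N' {y..} = (\<integral>\<^sup>+x. T (y - x) \<partial>unifD)"
    unfolding conv2[of "{y..}", simplified] T_def
    by (intro nn_integral_cong arg_cong[where f="emeasure N"]) auto
  have e2: "(\<integral>\<^sup>+x. T (y - x) \<partial>unifD) = (\<integral>\<^sup>+x. T (y + x) \<partial>unifD)"
    using reflect_U[of "\<lambda>x. T (y + x)"] by simp
  have pw: "2 * T y \<le> T (y - x) + T (y + x)" for x
  proof (cases "0 \<le> x")
    case True
    then show ?thesis using tail_pointwise[OF assms(1) atom y True] by (simp add: T_def)
  next
    case False
    then show ?thesis using tail_pointwise[OF assms(1) atom y, of "-x"] by (simp add: T_def add.commute)
  qed
  have "2 * T y = (\<integral>\<^sup>+x. 2 * T y \<partial>unifD)"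
    using U.emeasure_space_1 by simp
  also have "\<dots> \<le> (\<integral>\<^sup>+x. T (y - x) + T (y + x) \<partial>unifD)"
    by (intro nn_integral_mono pw)
  also have "\<dots> = (\<integral>\<^sup>+x. T (y - x) \<partial>unifD) + (\<integral>\<^sup>+x. T (y + x) \<partial>unifD)"
    by (rule nn_integral_add) measurable
  also have "\<dots> = 2 * emeasure N' {y..}"
    using e1 e2 by (simp add: mult_2)
  finally have "2 * T y \<le> 2 * emeasure N' {y..}" .
  then show ?thesis unfolding T_def by (subst (asm) ennreal_mult_le_mult_iff) auto
qed

lemma sets_unifD_sum[simp, measurable_cong]: "sets (unifD_sum m) = sets borel"
  unfolding unifD_sum_def by simp

lemma unifD_sum_0: "S \<in> sets borel \<Longrightarrow> emeasure (unifD_sum 0) S = indicator S 0"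
proof -
  assume S: "S \<in> sets borel"
  have "emeasure (unifD_sum 0) S = emeasure (PiM ({}::nat set) (\<lambda>_. unifD)) ((\<lambda>\<omega>. 0::real) -` S \<inter> space (PiM ({}::nat set) (\<lambda>_. unifD)))"
    unfolding unifD_sum_def using S by (subst emeasure_distr) auto
  also have "\<dots> = indicator S (0::real)"
  proof (cases "(0::real) \<in> S")
    case True
    then have "(\<lambda>\<omega>. 0::real) -` S \<inter> space (PiM ({}::nat set) (\<lambda>_. unifD)) = {\<lambda>_. undefined}"
      by (simp add: PiM_empty)
    then show ?thesis using True by (simp add: PiM_empty)
  next
    case False
    then have "(\<lambda>\<omega>. 0::real) -` S \<inter> space (PiM ({}::nat set) (\<lambda>_. unifD)) = {}"
      by simp
    then show ?thesis using False by simp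
  qed
  finally show ?thesis .
qed
lemma good_0: "good (unifD_sum 0)"
proof -
  have "emeasure (unifD_sum 0) (space (unifD_sum 0)) = 1"
    using unifD_sum_0[of UNIV] sets_eq_imp_space_eq[OF sets_unifD_sum[of 0]] by simp
  then have P: "prob_space (unifD_sum 0)" by (rule prob_spaceI)
  have Q: "emeasure (unifD_sum 0) {c'-h..c'+h} \<le> emeasure (unifD_sum 0) {c-h..c+h}"
    if "\<bar>c\<bar> \<le> \<bar>c'\<bar>" for c c' h :: real
  proof -
    have "indicator {c'-h..c'+h} (0::real) \<le> (indicator {c-h..c+h} (0::real) :: ennreal)"
      using that by (auto simp: indicator_def)
    then show ?thesis by (simp add: unifD_sum_0)
  qed
  have S: "emeasure (unifD_sum 0) {y..} = emeasure (unifD_sum 0) {..-y}" for y :: real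
    by (simp add: unifD_sum_0 indicator_def)
  show ?thesis unfolding good_def using P Q S by simp
qed
lemma isconv_Suc: "isconv (unifD_sum k) (unifD_sum (Suc k))"
  unfolding isconv_def
proof (intro conjI ballI)
  show "sets (unifD_sum (Suc k)) = sets borel" by simp
  fix S :: "real set" assume S[measurable]: "S \<in> sets borel"
  interpret U: prob_space unifD by (rule U_prob)
  interpret PP: product_prob_space "\<lambda>_::nat. unifD"
    by (simp add: product_prob_space_def product_prob_space_axioms_def product_sigma_finite_def U_prob prob_space_imp_sigma_finite)
  have mg: "(\<lambda>w. emeasure unifD {y. w + y \<in> S}) \<in> borel_measurable borel"
    using meas_shift[OF _ sets_U S] U.sigma_finite_measure_axioms by (simp add: add.commute)
  have "emeasure (unifD_sum (Suc k)) S = (\<integral>\<^sup>+x. indicator S x \<partial>unifD_sum (Suc k))"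
    using S by simp
  also have "\<dots> = (\<integral>\<^sup>+\<omega>. indicator S (\<Sum>i<Suc k. \<omega> i) \<partial>PiM {..<Suc k} (\<lambda>_. unifD))"
    unfolding unifD_sum_def by (subst nn_integral_distr) auto
  also have "\<dots> = (\<integral>\<^sup>+\<omega>. indicator S (\<Sum>i<Suc k. \<omega> i) \<partial>PiM (insert k {..<k}) (\<lambda>_. unifD))"
    by (simp add: lessThan_Suc)
  also have "\<dots> = (\<integral>\<^sup>+\<omega>. (\<integral>\<^sup>+y. indicator S (\<Sum>i<Suc k. fun_upd \<omega> k y i) \<partial>unifD) \<partial>PiM {..<k} (\<lambda>_. unifD))"
    by (rule PP.product_nn_integral_insert) (auto simp: lessThan_Suc[symmetric])
  also have "\<dots> = (\<integral>\<^sup>+\<omega>. emeasure unifD {y. (\<Sum>i<k. \<omega> i) + y \<in> S} \<partial>PiM {..<k} (\<lambda>_. unifD))"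
  proof (intro nn_integral_cong)
    fix \<omega> :: "nat \<Rightarrow> real"
    have "(\<Sum>i<Suc k. fun_upd \<omega> k y i) = (\<Sum>i<k. \<omega> i) + y" for y
    proof -
      have "(\<Sum>i<k. fun_upd \<omega> k y i) = (\<Sum>i<k. \<omega> i)"
        by (intro sum.cong) auto
      then show ?thesis by (simp add: sum.lessThan_Suc)
    qed
    then have "(\<integral>\<^sup>+y. indicator S (\<Sum>i<Suc k. fun_upd \<omega> k y i) \<partial>unifD) = (\<integral>\<^sup>+y. indicator {y. (\<Sum>i<k. \<omega> i) + y \<in> S} y \<partial>unifD)"
      by (simp add: indicator_def)
    also have "\<dots> = emeasure unifD {y. (\<Sum>i<k. \<omega> i) + y \<in> S}"
      by (rule nn_integral_indicator) simp
    finally show "(\<integral>\<^sup>+y. indicator S (\<Sum>i<Suc k. fun_upd \<omega> k y i) \<partial>unifD) = emeasure unifD {y. (\<Sum>i<k. \<omega> i) + y \<in> S}" .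
  qed
  also have "\<dots> = (\<integral>\<^sup>+w. emeasure unifD {y. w + y \<in> S} \<partial>unifD_sum k)"
    unfolding unifD_sum_def using mg by (subst nn_integral_distr) auto
  finally show "emeasure (unifD_sum (Suc k)) S = (\<integral>\<^sup>+w. emeasure unifD {x. w + x \<in> S} \<partial>unifD_sum k)" .
qed

lemma good_sum: "good (unifD_sum m)"
proof (induction m)
  case 0 show ?case by (rule good_0)
next
  case (Suc m) show ?case by (rule step(1)[OF Suc isconv_Suc])
qed

lemma atom_sum: "1 \<le> m \<Longrightarrow> emeasure (unifD_sum m) {a} = 0"
proof -
  assume "1 \<le> m"
  then obtain k where "m = Suc k" by (cases m) auto
  then show ?thesis using step(2)[OF good_sum isconv_Suc] by simp
qed

lemma tail_meas:
  assumes "good N"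
  shows "(\<lambda>t. emeasure N {t..}) \<in> borel_measurable borel"
proof -
  have P: "prob_space N" and sN: "sets N = sets borel"
    using assms(1) unfolding good_def by auto
  interpret N: prob_space N by (rule P)
  have "(\<lambda>t. emeasure N {w. w + (- t) \<in> {0..}}) \<in> borel_measurable borel"
    using measurable_compose[OF borel_measurable_uminus[OF measurable_id] meas_shift[OF _ sN, of "{0..}"]]
      N.sigma_finite_measure_axioms by (simp add: o_def)
  moreover have "(\<lambda>t. emeasure N {w. w + (- t) \<in> {0..}}) = (\<lambda>t. emeasure N {t..})"
    by (intro ext arg_cong[where f="emeasure N"]) auto
  ultimately show ?thesis by simp
qed

lemma sum1:
  assumes "good N" and atom: "\<And>a. emeasure N {a} = 0"
  shows "emeasure N {y..} + emeasure N {-y..} = 1"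
proof -
  have P: "prob_space N" and sN: "sets N = sets borel"
    and symN: "\<And>y. emeasure N {y..} = emeasure N {..-y}"
    using assms(1) unfolding good_def by auto
  interpret N: prob_space N by (rule P)
  have spN: "space N = UNIV" using sets_eq_imp_space_eq[OF sN] by simp
  have [simp]: "A \<in> sets borel \<Longrightarrow> A \<in> sets N" for A using sN by simp
  have T2: "emeasure N {y..} = emeasure N {y<..}"
  proof -
    have "{y..} = {y} \<union> {y<..}" by auto
    moreover have "emeasure N {y} + emeasure N {y<..} = emeasure N ({y} \<union> {y<..})"
      by (rule plus_emeasure) auto
    ultimately show ?thesis using atom by simp
  qed
  have "emeasure N {-y..} = emeasure N {..y}" using symN[of "-y"] by simp
  moreover have "emeasure N {y<..} + emeasure N {..y} = emeasure N ({y<..} \<union> {..y})"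
    by (rule plus_emeasure) auto
  moreover have "{y<..} \<union> {..y} = space N" using spN by auto
  ultimately show ?thesis using T2 N.emeasure_space_1 by simp
qed

lemma final_ineq:
  fixes fY :: "real \<Rightarrow> real"
  assumes gN: "good N" and gN': "good N'"
    and aN: "\<And>a. emeasure N {a} = 0" and aN': "\<And>a. emeasure N' {a} = 0"
    and tm: "\<And>y. 0 \<le> y \<Longrightarrow> emeasure N {y..} \<le> emeasure N' {y..}"
    and f0: "\<And>y. fY y \<ge> 0" and fsym: "\<And>y. y \<ge> 0 \<Longrightarrow> fY y \<ge> fY (- y)"
    and fm: "(\<lambda>y. ennreal (fY y)) \<in> borel_measurable borel"
  shows "(\<integral>\<^sup>+y. ennreal (fY y) * emeasure N {y..} \<partial>lborel) \<le> (\<integral>\<^sup>+y. ennreal (fY y) * emeasure N' {y..} \<partial>lborel)"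
proof -
  interpret N: prob_space N using gN unfolding good_def by auto
  interpret N': prob_space N' using gN' unfolding good_def by auto
  have [measurable]: "(\<lambda>t. emeasure N {t..}) \<in> borel_measurable borel" "(\<lambda>t. emeasure N' {t..}) \<in> borel_measurable borel"
    using tail_meas gN gN' by auto
  note fm[measurable]
  define T where "T y = measure N {y..}" for y
  define T' where "T' y = measure N' {y..}" for y
  have eT: "emeasure N {y..} = ennreal (T y)" for y unfolding T_def by (rule N.emeasure_eq_measure)
  have eT': "emeasure N' {y..} = ennreal (T' y)" for y unfolding T'_def by (rule N'.emeasure_eq_measure)
  have T0: "T y \<ge> 0" "T' y \<ge> 0" for y unfolding T_def T'_def by auto
  have s1: "T y + T (-y) = 1" for y
    using sum1[OF gN aN, of y] unfolding eT using T0 by (simp del: ennreal_plus add: ennreal_plus[symmetric])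
  have s1': "T' y + T' (-y) = 1" for y
    using sum1[OF gN' aN', of y] unfolding eT' using T0 by (simp del: ennreal_plus add: ennreal_plus[symmetric])
  have tm': "0 \<le> y \<Longrightarrow> T y \<le> T' y" for y using tm[of y] T0 unfolding eT eT' by simp
  have pw: "ennreal (fY y) * emeasure N {y..} + ennreal (fY (-y)) * emeasure N {-y..}
       \<le> ennreal (fY y) * emeasure N' {y..} + ennreal (fY (-y)) * emeasure N' {-y..}" for y
  proof -
    define a b t s where "a = fY y" "b = fY (-y)" "t = T y" "s = T' y"
    have tt: "T (-y) = 1 - t" "T' (-y) = 1 - s" using s1[of y] s1'[of y] unfolding a_b_t_s_def by auto
    have "(a - b) * (s - t) \<ge> 0"
    proof (cases "0 \<le> y")
      case True
      then show ?thesis using fsym[of y] tm'[of y] unfolding a_b_t_s_def by (intro mult_nonneg_nonneg) auto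
    next
      case False
      have "fY (- y) \<ge> fY (- (- y))" using False by (intro fsym) auto
      moreover have "T (-y) \<le> T' (-y)" using False by (intro tm') auto
      ultimately show ?thesis using tt unfolding a_b_t_s_def by (intro mult_nonpos_nonpos) auto
    qed
    then have "a * t + b * (1 - t) \<le> a * s + b * (1 - s)" by (simp add: algebra_simps)
    moreover have "a \<ge> 0" "b \<ge> 0" "t \<ge> 0" "s \<ge> 0" "1 - t \<ge> 0" "1 - s \<ge> 0"
      using f0 T0 tt unfolding a_b_t_s_def by (metis)+
    ultimately have "ennreal a * ennreal t + ennreal b * ennreal (1 - t) \<le> ennreal a * ennreal s + ennreal b * ennreal (1 - s)"
      by (simp del: ennreal_plus add: ennreal_mult[symmetric] ennreal_plus[symmetric] ennreal_leI)
    then show ?thesis using tt unfolding eT eT' a_b_t_s_def by simp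
  qed
  define I where "I = (\<integral>\<^sup>+y. ennreal (fY y) * emeasure N {y..} \<partial>lborel)"
  define I' where "I' = (\<integral>\<^sup>+y. ennreal (fY y) * emeasure N' {y..} \<partial>lborel)"
  have r: "I = (\<integral>\<^sup>+y. ennreal (fY (-y)) * emeasure N {-y..} \<partial>lborel)"
    unfolding I_def by (rule lborel_reflect[symmetric, of "\<lambda>y. ennreal (fY y) * emeasure N {y..}"]) measurable
  have r': "I' = (\<integral>\<^sup>+y. ennreal (fY (-y)) * emeasure N' {-y..} \<partial>lborel)"
    unfolding I'_def by (rule lborel_reflect[symmetric, of "\<lambda>y. ennreal (fY y) * emeasure N' {y..}"]) measurable
  have "2 * I = I + I" by (simp add: mult_2)
  also have "\<dots> = (\<integral>\<^sup>+y. ennreal (fY y) * emeasure N {y..} + ennreal (fY (-y)) * emeasure N {-y..} \<partial>lborel)"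
    unfolding I_def by (subst (2) r[unfolded I_def], rule nn_integral_add[symmetric]) measurable
  also have "\<dots> \<le> (\<integral>\<^sup>+y. ennreal (fY y) * emeasure N' {y..} + ennreal (fY (-y)) * emeasure N' {-y..} \<partial>lborel)"
    by (intro nn_integral_mono pw)
  also have "\<dots> = I' + I'"
    unfolding I'_def by (subst (2) r'[unfolded I'_def], rule nn_integral_add) measurable
  also have "\<dots> = 2 * I'" by (simp add: mult_2)
  finally have "2 * I \<le> 2 * I'" .
  then show ?thesis unfolding I_def I'_def by (subst (asm) ennreal_mult_le_mult_iff) auto
qed

lemma prob_formula:
  fixes M :: "'a measure" and A Y :: "'a \<Rightarrow> real" and fY :: "real \<Rightarrow> real"
  assumes P: "prob_space M" and ind: "prob_space.indep_var M borel A borel Y"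
    and dY: "distributed M lborel Y (\<lambda>y. ennreal (fY y))"
    and gA: "good (distr M borel A)"
  shows "emeasure M {\<omega> \<in> space M. Y \<omega> \<le> A \<omega>}
    = (\<integral>\<^sup>+y. ennreal (fY y) * emeasure (distr M borel A) {y..} \<partial>lborel)"
proof -
  interpret prob_space M by (rule P)
  have rA[measurable]: "A \<in> borel_measurable M" and rY[measurable]: "Y \<in> borel_measurable M"
    using ind by (auto dest: indep_var_rv1 indep_var_rv2)
  let ?NA = "distr M borel A" and ?NY = "distr M borel Y"
  interpret NA: prob_space ?NA by (rule prob_space_distr) simp
  interpret NY: prob_space ?NY by (rule prob_space_distr) simp
  interpret PP: pair_sigma_finite ?NA ?NY ..
  have joint: "?NA \<Otimes>\<^sub>M ?NY = distr M (borel \<Otimes>\<^sub>M borel) (\<lambda>x. (A x, Y x))"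
    using ind by (simp add: indep_var_distribution_eq)
  define D where "D = {p::real \<times> real. snd p \<le> fst p}"
  have D[measurable]: "D \<in> sets (borel \<Otimes>\<^sub>M borel)"
  proof -
    have "{p \<in> space (borel \<Otimes>\<^sub>M borel). snd p \<le> (fst p::real)} \<in> sets (borel \<Otimes>\<^sub>M borel)"
      by measurable
    then show ?thesis unfolding D_def by (simp add: space_pair_measure)
  qed
  have "{\<omega> \<in> space M. Y \<omega> \<le> A \<omega>} = (\<lambda>x. (A x, Y x)) -` D \<inter> space M"
    unfolding D_def by auto
  then have "emeasure M {\<omega> \<in> space M. Y \<omega> \<le> A \<omega>} = emeasure (distr M (borel \<Otimes>\<^sub>M borel) (\<lambda>x. (A x, Y x))) D"
    by (simp add: emeasure_distr)
  also have "\<dots> = emeasure (?NA \<Otimes>\<^sub>M ?NY) D" by (simp add: joint)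
  also have "\<dots> = (\<integral>\<^sup>+y. emeasure ?NA ((\<lambda>x. (x, y)) -` D) \<partial>?NY)"
    by (rule PP.emeasure_pair_measure_alt2) (simp add: sets_pair_measure_cong[of ?NA borel ?NY borel])
  also have "\<dots> = (\<integral>\<^sup>+y. emeasure ?NA {y..} \<partial>?NY)"
    unfolding D_def by (intro nn_integral_cong arg_cong[where f="emeasure ?NA"]) auto
  also have "?NY = density lborel (\<lambda>y. ennreal (fY y))"
  proof -
    have "?NY = distr M lborel Y" by (rule distr_cong) auto
    then show ?thesis using dY by (simp add: distributed_distr_eq_density)
  qed
  also have "(\<integral>\<^sup>+y. emeasure ?NA {y..} \<partial>density lborel (\<lambda>y. ennreal (fY y))) = (\<integral>\<^sup>+y. ennreal (fY y) * emeasure ?NA {y..} \<partial>lborel)"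
    using tail_meas[OF gA] distributed_borel_measurable[OF dY] by (subst nn_integral_density) auto
  finally show ?thesis .
qed

lemma conv_indep:
  fixes M :: "'a measure" and Z X :: "'a \<Rightarrow> real"
  assumes P: "prob_space M" and ind: "prob_space.indep_var M borel Z borel X"
    and dX: "distr M borel X = unifD"
  shows "isconv (distr M borel Z) (distr M borel (\<lambda>\<omega>. Z \<omega> + X \<omega>))"
  unfolding isconv_def
proof (intro conjI ballI)
  interpret prob_space M by (rule P)
  interpret U: prob_space unifD by (rule U_prob)
  have rZ[measurable]: "Z \<in> borel_measurable M" and rX[measurable]: "X \<in> borel_measurable M"
    using ind by (auto dest: indep_var_rv1 indep_var_rv2)
  show "sets (distr M borel (\<lambda>\<omega>. Z \<omega> + X \<omega>)) = sets borel" by simp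
  fix S :: "real set" assume S[measurable]: "S \<in> sets borel"
  let ?NZ = "distr M borel Z"
  have joint: "?NZ \<Otimes>\<^sub>M unifD = distr M (borel \<Otimes>\<^sub>M borel) (\<lambda>x. (Z x, X x))"
    using ind by (simp add: indep_var_distribution_eq dX)
  define D where "D = {p::real \<times> real. fst p + snd p \<in> S}"
  have D[measurable]: "D \<in> sets (borel \<Otimes>\<^sub>M borel)"
  proof -
    have "{p \<in> space (borel \<Otimes>\<^sub>M borel). fst p + snd p \<in> S} \<in> sets (borel \<Otimes>\<^sub>M borel)"
      by measurable
    then show ?thesis unfolding D_def by (simp add: space_pair_measure)
  qed
  have "(\<lambda>\<omega>. Z \<omega> + X \<omega>) -` S \<inter> space M = (\<lambda>x. (Z x, X x)) -` D \<inter> space M"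
    unfolding D_def by auto
  then have "emeasure (distr M borel (\<lambda>\<omega>. Z \<omega> + X \<omega>)) S = emeasure (distr M (borel \<Otimes>\<^sub>M borel) (\<lambda>x. (Z x, X x))) D"
    by (simp add: emeasure_distr)
  also have "\<dots> = emeasure (?NZ \<Otimes>\<^sub>M unifD) D" by (simp add: joint)
  also have "\<dots> = (\<integral>\<^sup>+w. emeasure unifD (Pair w -` D) \<partial>?NZ)"
    by (rule U.emeasure_pair_measure_alt) (simp add: sets_pair_measure_cong[of ?NZ borel unifD borel])
  also have "\<dots> = (\<integral>\<^sup>+w. emeasure unifD {x. w + x \<in> S} \<partial>?NZ)"
    unfolding D_def by (intro nn_integral_cong arg_cong[where f="emeasure unifD"]) auto
  finally show "emeasure (distr M borel (\<lambda>\<omega>. Z \<omega> + X \<omega>)) S = (\<integral>\<^sup>+w. emeasure unifD {x. w + x \<in> S} \<partial>?NZ)" .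
qed

theorem lemma24:
  fixes M :: "'a measure" and Z1 X Y :: "'a \<Rightarrow> real" and fY :: "real \<Rightarrow> real" and m :: nat
  assumes "prob_space M"
    and "m \<ge> 1"
    and "Z1 \<in> borel_measurable M" and "distr M lborel Z1 = unifD_sum m"
    and "X \<in> borel_measurable M" and "distr M lborel X = unifD"
    and "\<And>y. fY y \<ge> 0"
    and "distributed M lborel Y (\<lambda>y. ennreal (fY y))"
    and "\<And>y. y \<ge> 0 \<Longrightarrow> fY y \<ge> fY (- y)"
    and "prob_space.indep_vars M (\<lambda>_. borel)
           (\<lambda>i::nat. if i = 0 then Z1 else if i = 1 then X else Y) {0, 1, 2}"
  shows "measure M {\<omega> \<in> space M. Z1 \<omega> \<ge> Y \<omega>}
           \<le> measure M {\<omega> \<in> space M. Z1 \<omega> + X \<omega> \<ge> Y \<omega>}"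
proof -
  interpret prob_space M by (rule assms(1))
  define F where "F = (\<lambda>i::nat. if i = 0 then Z1 else if i = 1 then X else Y)"
  have ind: "indep_vars (\<lambda>_. borel) F {0, 1, 2}" using assms(10) unfolding F_def .
  have i01: "indep_var borel Z1 borel X"
  proof -
    have "indep_var borel ((\<lambda>f. f 0) \<circ> (\<lambda>\<omega>. restrict (\<lambda>i. F i \<omega>) {0}))
                     borel ((\<lambda>f. f 1) \<circ> (\<lambda>\<omega>. restrict (\<lambda>i. F i \<omega>) {1}))"
      by (intro indep_var_compose[OF indep_var_restrict[OF ind]]) auto
    also have "((\<lambda>f. f 0) \<circ> (\<lambda>\<omega>. restrict (\<lambda>i. F i \<omega>) {0})) = Z1" by (auto simp: F_def)
    also have "((\<lambda>f. f 1) \<circ> (\<lambda>\<omega>. restrict (\<lambda>i. F i \<omega>) {1})) = X" by (auto simp: F_def)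
    finally show ?thesis .
  qed
  have i02: "indep_var borel Z1 borel Y"
  proof -
    have "indep_var borel ((\<lambda>f. f 0) \<circ> (\<lambda>\<omega>. restrict (\<lambda>i. F i \<omega>) {0}))
                     borel ((\<lambda>f. f 2) \<circ> (\<lambda>\<omega>. restrict (\<lambda>i. F i \<omega>) {2}))"
      by (intro indep_var_compose[OF indep_var_restrict[OF ind]]) auto
    also have "((\<lambda>f. f 0) \<circ> (\<lambda>\<omega>. restrict (\<lambda>i. F i \<omega>) {0})) = Z1" by (auto simp: F_def)
    also have "((\<lambda>f. f 2) \<circ> (\<lambda>\<omega>. restrict (\<lambda>i. F i \<omega>) {2})) = Y" by (auto simp: F_def)
    finally show ?thesis .
  qed
  have i012: "indep_var borel (\<lambda>\<omega>. Z1 \<omega> + X \<omega>) borel Y"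
  proof -
    have "indep_var borel ((\<lambda>f. f 0 + f 1) \<circ> (\<lambda>\<omega>. restrict (\<lambda>i. F i \<omega>) {0, 1}))
                     borel ((\<lambda>f. f 2) \<circ> (\<lambda>\<omega>. restrict (\<lambda>i. F i \<omega>) {2}))"
      by (intro indep_var_compose[OF indep_var_restrict[OF ind]]) auto
    also have "((\<lambda>f. f 0 + f 1) \<circ> (\<lambda>\<omega>. restrict (\<lambda>i. F i \<omega>) {0, 1})) = (\<lambda>\<omega>. Z1 \<omega> + X \<omega>)" by (auto simp: F_def)
    also have "((\<lambda>f. f 2) \<circ> (\<lambda>\<omega>. restrict (\<lambda>i. F i \<omega>) {2})) = Y" by (auto simp: F_def)
    finally show ?thesis .
  qed
  have NZ: "distr M borel Z1 = unifD_sum m"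
  proof -
    have "distr M borel Z1 = distr M lborel Z1" by (rule distr_cong) auto
    then show ?thesis using assms(4) by simp
  qed
  have NX: "distr M borel X = unifD"
  proof -
    have "distr M borel X = distr M lborel X" by (rule distr_cong) auto
    then show ?thesis using assms(6) by simp
  qed
  let ?N' = "distr M borel (\<lambda>\<omega>. Z1 \<omega> + X \<omega>)"
  have gZ: "good (distr M borel Z1)" unfolding NZ by (rule good_sum)
  have aZ: "emeasure (distr M borel Z1) {a} = 0" for a unfolding NZ using assms(2) by (rule atom_sum)
  have cv: "isconv (distr M borel Z1) ?N'" by (rule conv_indep[OF assms(1) i01 NX])
  have gN': "good ?N'" and aN': "\<And>a. emeasure ?N' {a} = 0" using step[OF gZ cv] by auto
  have tm: "0 \<le> y \<Longrightarrow> emeasure (distr M borel Z1) {y..} \<le> emeasure ?N' {y..}" for y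
    by (rule tail_mono[OF gZ aZ cv])
  have fm: "(\<lambda>y. ennreal (fY y)) \<in> borel_measurable borel"
    using distributed_borel_measurable[OF assms(8)] by simp
  have "emeasure M {\<omega> \<in> space M. Y \<omega> \<le> Z1 \<omega>} \<le> emeasure M {\<omega> \<in> space M. Y \<omega> \<le> Z1 \<omega> + X \<omega>}"
    unfolding prob_formula[OF assms(1) i02 assms(8) gZ] prob_formula[OF assms(1) i012 assms(8) gN']
    by (rule final_ineq[OF gZ gN' aZ aN' tm assms(7) assms(9) fm])
  then show ?thesis by (simp add: emeasure_eq_measure)
qed

end
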